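(* Let $\theta=(\{X_g\},\{\theta_g\})$ be an ordered partial action of a groupoid $\mathcal{G}$ on a semilatticeoid $X$ such that $X_g\neq\emptyset$ for every $g\in\mathcal{G}$. Let $(\eta,E,i)$ be the ordered globalization of $\theta$ given by the globalization construction (with the induced order on $E$). Then $(\mathcal{G},E,i(X))$ is a McAlister triple.
   Context: Inverse semigroupoid: arrows $\mathcal{S}$, objects $\mathcal{S}^{(0)}$, maps $d,c$, associative multiplication on $\mathcal{S}^{(2)}=\{(s,t):d(s)=c(t)\}$ with $d(st)=d(t)$, $c(st)=c(s)$, unique $s^*$ with $ss^*s=s$, $s^*ss^*=s^*$; $E(\mathcal{S})$ = idempotents; natural order on parallel arrows $s\leqslant t$ iff $s=te$ for an idempotent $e$ with $(t,e)\in\mathcal{S}^{(2)}$. A groupoid is an inverse semigroupoid with exactly one idempotent (the identity) over each object; the inverse of $g$ is written $g^{-1}$. A semilatticeoid is an inverse semigroupoid all of whose elements are idempotent (a disjoint union of meet semilattices, one per object), ordered by its natural order. A partial action of $\mathcal{S}$ on a set $X$ is a pair $(\{X_s\},\{\theta_s\})$, $X_s\subseteq X$, $\theta_s:X_{s^*}\to X_s$, with: each $\theta_s$ bijective, $\theta_s^{-1}=\theta_{s^*}$, $X=\bigcup_sX_s$; $\theta_s\circ\theta_t\subseteq\theta_{st}$ for $(s,t)\in\mathcal{S}^{(2)}$; $X_s\subseteq X_t$ if $s\leqslant t$. Global: $\theta_s\circ\theta_t=\theta_{st}$. Ordered (on a poset): each $X_s$ an order ideal, each $\theta_s$ an order isomorphism.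 Orbit of $Y\subseteq E$ under a global action $\eta$: $\bigcup_s\eta_s(Y\cap E_{s^*})$. A McAlister triple $(\mathcal{G},E,X)$ consists of a groupoid $\mathcal{G}$, a poset $E$, an order ideal $X$ of $E$ which is a semilatticeoid under the induced order, and an ordered global action $\eta$ of $\mathcal{G}$ on $E$ such that the orbit of $X$ is $E$ and $\eta_g(X\cap E_{g^{-1}})\cap X\neq\emptyset$ for all $g\in\mathcal{G}$. Globalization construction: $D=\{(s,x)\in\mathcal{S}\times X:x\in X_{s^*s}\}$; $(s,x)\sim(t,y)$ iff (R1) $(t^*,s)\in\mathcal{S}^{(2)}$, $x\in X_{s^*t}$, $\theta_{t^*s}(x)=y$, or (R2) $s,t\in E(\mathcal{S})$ and $x=y$; $\approx$ the equivalence relation generated by $\sim$; $E=D/{\approx}$ with classes $[s,x]$; $D_s=\{(p,x)\in D:(s^*,p)\in\mathcal{S}^{(2)},x\in X_{p^*ss^*p}\}$, $E_s=\{[p,x]:(p,x)\in D_s\}$, $\eta_s([p,x])=[sp,x]$ for $(p,x)\in D_{s^*}$; $i(x)=[e,x]$ for any idempotent $e$ with $x\in X_e$. Order on $E$: $[s,x]\leqslant[t,y]$ iff there exist $(r,y')\in D$, $x'\in X$ with $(r,y')\approx(t,y)$, $x'\leqslant y'$, $(r,x')\approx(s,x)$. It is known that then $\eta$ is an ordered global action on $E$, $i$ is an injective order embedding onto the order ideal $i(X)$, and the orbit of $i(X)$ is $E$. *)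

theory Defs
  imports Main
begin

record ('a,'o) semigroupoid =
  arr  :: "'a set"
  obj  :: "'o set"
  sdom :: "'a \<Rightarrow> 'o"
  scod :: "'a \<Rightarrow> 'o"
  mult :: "'a \<Rightarrow> 'a \<Rightarrow> 'a"

definition composable :: "('a,'o,'z) semigroupoid_scheme \<Rightarrow> 'a \<Rightarrow> 'a \<Rightarrow> bool" where
  "composable S s t \<longleftrightarrow> s \<in> arr S \<and> t \<in> arr S \<and> sdom S s = scod S t"

definition semigroupoid :: "('a,'o,'z) semigroupoid_scheme \<Rightarrow> bool" where
  "semigroupoid S \<longleftrightarrow>
     (\<forall>s\<in>arr S. sdom S s \<in> obj S \<and> scod S s \<in> obj S) \<and>
     (\<forall>s t. composable S s t \<longrightarrow>
        mult S s t \<in> arr S \<and> sdom S (mult S s t) = sdom S t \<and> scod S (mult S s t) = scod S s) \<and>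
     (\<forall>s t u. composable S s t \<and> composable S t u \<longrightarrow>
        mult S (mult S s t) u = mult S s (mult S t u))"

definition is_inv :: "('a,'o,'z) semigroupoid_scheme \<Rightarrow> 'a \<Rightarrow> 'a \<Rightarrow> bool" where
  "is_inv S s s' \<longleftrightarrow> s' \<in> arr S \<and> sdom S s = scod S s' \<and> sdom S s' = scod S s \<and>
     mult S (mult S s s') s = s \<and> mult S (mult S s' s) s' = s'"

definition inverse_semigroupoid :: "('a,'o,'z) semigroupoid_scheme \<Rightarrow> bool" where
  "inverse_semigroupoid S \<longleftrightarrow> semigroupoid S \<and> (\<forall>s\<in>arr S. \<exists>!s'. is_inv S s s')"

definition star :: "('a,'o,'z) semigroupoid_scheme \<Rightarrow> 'a \<Rightarrow> 'a" where
  "star S s = (THE s'. is_inv S s s')"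

definition idem :: "('a,'o,'z) semigroupoid_scheme \<Rightarrow> 'a \<Rightarrow> bool" where
  "idem S e \<longleftrightarrow> e \<in> arr S \<and> sdom S e = scod S e \<and> mult S e e = e"

definition nat_le :: "('a,'o,'z) semigroupoid_scheme \<Rightarrow> 'a \<Rightarrow> 'a \<Rightarrow> bool" where
  "nat_le S s t \<longleftrightarrow> s \<in> arr S \<and> t \<in> arr S \<and> sdom S s = sdom S t \<and> scod S s = scod S t \<and>
     (\<exists>e. idem S e \<and> sdom S t = scod S e \<and> s = mult S t e)"

definition groupoid :: "('a,'o,'z) semigroupoid_scheme \<Rightarrow> bool" where
  "groupoid S \<longleftrightarrow> inverse_semigroupoid S \<and> (\<forall>x\<in>obj S. \<exists>!e. idem S e \<and> sdom S e = x)"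

definition semilatticeoid :: "('a,'o,'z) semigroupoid_scheme \<Rightarrow> bool" where
  "semilatticeoid S \<longleftrightarrow> inverse_semigroupoid S \<and> (\<forall>s\<in>arr S. idem S s)"

definition poset_on :: "'e set \<Rightarrow> ('e \<Rightarrow> 'e \<Rightarrow> bool) \<Rightarrow> bool" where
  "poset_on E le \<longleftrightarrow> (\<forall>x\<in>E. le x x) \<and>
     (\<forall>x\<in>E. \<forall>y\<in>E. le x y \<and> le y x \<longrightarrow> x = y) \<and>
     (\<forall>x\<in>E. \<forall>y\<in>E. \<forall>z\<in>E. le x y \<and> le y z \<longrightarrow> le x z)"

definition order_ideal :: "'e set \<Rightarrow> ('e \<Rightarrow> 'e \<Rightarrow> bool) \<Rightarrow> 'e set \<Rightarrow> bool" where
  "order_ideal E le Y \<longleftrightarrow> Y \<subseteq> E \<and> (\<forall>y\<in>Y. \<forall>z\<in>E. le z y \<longrightarrow> z \<in> Y)"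

definition partial_action ::
  "('a,'o,'z) semigroupoid_scheme \<Rightarrow> 'x set \<Rightarrow> ('a \<Rightarrow> 'x set) \<Rightarrow> ('a \<Rightarrow> 'x \<Rightarrow> 'x) \<Rightarrow> bool" where
  "partial_action S Xs Xd th \<longleftrightarrow>
     (\<forall>s\<in>arr S. Xd s \<subseteq> Xs) \<and>
     (\<forall>s\<in>arr S. bij_betw (th s) (Xd (star S s)) (Xd s)) \<and>
     (\<forall>s\<in>arr S. \<forall>x\<in>Xd (star S s). th (star S s) (th s x) = x) \<and>
     Xs = (\<Union>s\<in>arr S. Xd s) \<and>
     (\<forall>s t. composable S s t \<longrightarrow>
        (\<forall>x\<in>Xd (star S t). th t x \<in> Xd (star S s) \<longrightarrow>
           x \<in> Xd (star S (mult S s t)) \<and> th (mult S s t) x = th s (th t x))) \<and>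
     (\<forall>s t. nat_le S s t \<longrightarrow> Xd s \<subseteq> Xd t)"

text \<open>Global: th_s \<circ> th_t = th_st, i.e. additionally the domains coincide.\<close>
definition global_action ::
  "('a,'o,'z) semigroupoid_scheme \<Rightarrow> 'x set \<Rightarrow> ('a \<Rightarrow> 'x set) \<Rightarrow> ('a \<Rightarrow> 'x \<Rightarrow> 'x) \<Rightarrow> bool" where
  "global_action S Xs Xd th \<longleftrightarrow> partial_action S Xs Xd th \<and>
     (\<forall>s t. composable S s t \<longrightarrow>
        (\<forall>x\<in>Xd (star S (mult S s t)). x \<in> Xd (star S t) \<and> th t x \<in> Xd (star S s)))"

definition ordered_action_cond ::
  "('a,'o,'z) semigroupoid_scheme \<Rightarrow> 'x set \<Rightarrow> ('x \<Rightarrow> 'x \<Rightarrow> bool) \<Rightarrow> ('a \<Rightarrow> 'x set) \<Rightarrow> ('a \<Rightarrow> 'x \<Rightarrow> 'x) \<Rightarrow> bool" where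
  "ordered_action_cond S Xs le Xd th \<longleftrightarrow>
     (\<forall>s\<in>arr S. order_ideal Xs le (Xd s) \<and>
        (\<forall>x\<in>Xd (star S s). \<forall>y\<in>Xd (star S s). le x y \<longleftrightarrow> le (th s x) (th s y)))"

definition ordered_partial_action where
  "ordered_partial_action S Xs le Xd th \<longleftrightarrow>
     partial_action S Xs Xd th \<and> ordered_action_cond S Xs le Xd th"

definition ordered_global_action where
  "ordered_global_action S Xs le Xd th \<longleftrightarrow>
     global_action S Xs Xd th \<and> ordered_action_cond S Xs le Xd th"

definition orbit ::
  "('a,'o,'z) semigroupoid_scheme \<Rightarrow> ('a \<Rightarrow> 'x set) \<Rightarrow> ('a \<Rightarrow> 'x \<Rightarrow> 'x) \<Rightarrow> 'x set \<Rightarrow> 'x set" where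
  "orbit S Xd th Y = (\<Union>s\<in>arr S. th s ` (Y \<inter> Xd (star S s)))"

text \<open>The order ideal Y is a semilatticeoid under the induced order: there is a semilatticeoid
  structure with arrow set Y whose natural order is the restriction of le.  (Objects of that
  semilatticeoid are taken in the element type, which is no loss of generality.)\<close>
definition mcalister_triple ::
  "('a,'o,'z) semigroupoid_scheme \<Rightarrow> 'e set \<Rightarrow> ('e \<Rightarrow> 'e \<Rightarrow> bool) \<Rightarrow> ('a \<Rightarrow> 'e set)
    \<Rightarrow> ('a \<Rightarrow> 'e \<Rightarrow> 'e) \<Rightarrow> 'e set \<Rightarrow> bool" where
  "mcalister_triple G E le Ed eta Y \<longleftrightarrow>
     groupoid G \<and> poset_on E le \<and> order_ideal E le Y \<and>
     (\<exists>T :: ('e,'e) semigroupoid. semilatticeoid T \<and> arr T = Y \<and>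
         (\<forall>x\<in>Y. \<forall>y\<in>Y. nat_le T x y \<longleftrightarrow> le x y)) \<and>
     ordered_global_action G E le Ed eta \<and>
     orbit G Ed eta Y = E \<and>
     (\<forall>g\<in>arr G. eta g ` (Y \<inter> Ed (star G g)) \<inter> Y \<noteq> {})"

definition glD where
  "glD G X Xd = {(s,x). s \<in> arr G \<and> x \<in> arr X \<and> x \<in> Xd (mult G (star G s) s)}"

definition gl_sim where
  "gl_sim G Xd th a b \<longleftrightarrow> (case (a,b) of ((s,x),(t,y)) \<Rightarrow>
     (composable G (star G t) s \<and> x \<in> Xd (mult G (star G s) t) \<and> th (mult G (star G t) s) x = y)
     \<or> (idem G s \<and> idem G t \<and> x = y))"

definition glrel where
  "glrel G X Xd th = {(a,b). a \<in> glD G X Xd \<and> b \<in> glD G X Xd \<and> gl_sim G Xd th a b}"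

definition glapprox where
  "glapprox G X Xd th = (glrel G X Xd th \<union> (glrel G X Xd th)\<inverse>)\<^sup>* \<inter> (glD G X Xd \<times> glD G X Xd)"

definition glE where
  "glE G X Xd th = glD G X Xd // glapprox G X Xd th"

definition glcls where
  "glcls G X Xd th a = glapprox G X Xd th `` {a}"

definition glDs where
  "glDs G X Xd s = {(p,x) \<in> glD G X Xd. composable G (star G s) p \<and>
       x \<in> Xd (mult G (mult G (mult G (star G p) s) (star G s)) p)}"

definition glEs where
  "glEs G X Xd th s = glcls G X Xd th ` glDs G X Xd s"

definition gleta where
  "gleta G X Xd th s C = (SOME C'. \<exists>p x. (p,x) \<in> C \<and> (p,x) \<in> glDs G X Xd (star G s) \<and>
       C' = glcls G X Xd th (mult G s p, x))"

definition gli where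
  "gli G X Xd th x = glcls G X Xd th (SOME e. idem G e \<and> x \<in> Xd e, x)"

definition glle where
  "glle G X Xd th C C' \<longleftrightarrow> (\<exists>r y' x'. (r,y') \<in> glD G X Xd \<and> x' \<in> arr X \<and> (r,y') \<in> C' \<and>
       nat_le X x' y' \<and> (r,x') \<in> C)"

end

theory Submission
  imports Defs
begin



locale grpd =
  fixes G :: "('a,'o,'z) semigroupoid_scheme"
  assumes grp: "groupoid G"
begin

abbreviation "A \<equiv> arr G"
abbreviation "m \<equiv> mult G"
abbreviation "dm \<equiv> sdom G"
abbreviation "cd \<equiv> scod G"
abbreviation "iv \<equiv> star G"

lemma isg: "inverse_semigroupoid G" using grp unfolding groupoid_def by auto
lemma sg: "semigroupoid G" using isg unfolding inverse_semigroupoid_def by auto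

lemma mult_arr[simp]: "s \<in> A \<Longrightarrow> t \<in> A \<Longrightarrow> dm s = cd t \<Longrightarrow> m s t \<in> A"
  using sg unfolding semigroupoid_def composable_def by blast
lemma dm_mult[simp]: "s \<in> A \<Longrightarrow> t \<in> A \<Longrightarrow> dm s = cd t \<Longrightarrow> dm (m s t) = dm t"
  using sg unfolding semigroupoid_def composable_def by blast
lemma cd_mult[simp]: "s \<in> A \<Longrightarrow> t \<in> A \<Longrightarrow> dm s = cd t \<Longrightarrow> cd (m s t) = cd s"
  using sg unfolding semigroupoid_def composable_def by blast
lemma assoc[simp]: "s \<in> A \<Longrightarrow> t \<in> A \<Longrightarrow> u \<in> A \<Longrightarrow> dm s = cd t \<Longrightarrow> dm t = cd u \<Longrightarrow>
   m (m s t) u = m s (m t u)"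
  using sg unfolding semigroupoid_def composable_def by blast
lemma dm_obj: "s \<in> A \<Longrightarrow> dm s \<in> obj G"
  using sg unfolding semigroupoid_def by blast

lemma iv_is_inv: "s \<in> A \<Longrightarrow> is_inv G s (iv s)"
  unfolding star_def using isg unfolding inverse_semigroupoid_def
  by (metis theI')

lemma iv_arr[simp]: "s \<in> A \<Longrightarrow> iv s \<in> A" using iv_is_inv is_inv_def by metis
lemma dm_iv[simp]: "s \<in> A \<Longrightarrow> dm (iv s) = cd s" using iv_is_inv is_inv_def by metis
lemma cd_iv[simp]: "s \<in> A \<Longrightarrow> cd (iv s) = dm s" using iv_is_inv is_inv_def by metis
lemma sis[simp]: "s \<in> A \<Longrightarrow> m s (m (iv s) s) = s"
  using iv_is_inv[of s] unfolding is_inv_def by (metis assoc iv_arr)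
lemma sis'[simp]: "s \<in> A \<Longrightarrow> m (iv s) (m s (iv s)) = iv s"
  using iv_is_inv[of s] unfolding is_inv_def by (metis assoc iv_arr)

lemma inv_eq: "s \<in> A \<Longrightarrow> is_inv G s t \<Longrightarrow> iv s = t"
  using isg iv_is_inv unfolding inverse_semigroupoid_def by blast

lemma idem_unique: "idem G e \<Longrightarrow> idem G f \<Longrightarrow> dm e = dm f \<Longrightarrow> e = f"
  using grp dm_obj unfolding groupoid_def idem_def by metis

lemma idem_l[simp]: "s \<in> A \<Longrightarrow> idem G (m (iv s) s)"
  unfolding idem_def by (metis assoc cd_iv cd_mult dm_iv dm_mult iv_arr mult_arr sis')
lemma idem_r[simp]: "s \<in> A \<Longrightarrow> idem G (m s (iv s))"
  unfolding idem_def by (metis assoc cd_iv cd_mult dm_iv dm_mult iv_arr mult_arr sis)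

lemma idem_arr: "idem G e \<Longrightarrow> e \<in> A" unfolding idem_def by auto
lemma idem_dc: "idem G e \<Longrightarrow> dm e = cd e" unfolding idem_def by auto

lemma idl: "idem G e \<Longrightarrow> t \<in> A \<Longrightarrow> dm e = cd t \<Longrightarrow> m e t = t"
proof -
  assume a: "idem G e" "t \<in> A" "dm e = cd t"
  have "e = m t (iv t)" using a idem_unique[OF a(1) idem_r[OF a(2)]] by simp
  thus ?thesis using a by (simp add: sis[symmetric] del: sis) (metis a(2) assoc iv_arr sis dm_iv cd_iv)
qed

lemma idr: "idem G e \<Longrightarrow> t \<in> A \<Longrightarrow> cd e = dm t \<Longrightarrow> m t e = t"
proof -
  assume a: "idem G e" "t \<in> A" "cd e = dm t"
  have "e = m (iv t) t" using a idem_unique[OF a(1) idem_l[OF a(2)]] idem_dc by simp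
  thus ?thesis using a by simp
qed

lemma iv_iv[simp]: "s \<in> A \<Longrightarrow> iv (iv s) = s"
  using iv_is_inv[of s] by (intro inv_eq) (auto simp: is_inv_def)

lemma iv_idem: "idem G e \<Longrightarrow> iv e = e"
  by (intro inv_eq) (auto simp: is_inv_def idem_def)

lemma ll[simp]: "s \<in> A \<Longrightarrow> t \<in> A \<Longrightarrow> cd s = cd t \<Longrightarrow> m s (m (iv s) t) = t"
  by (metis assoc cd_iv dm_iv idem_r idl iv_arr dm_mult)
lemma ll'[simp]: "s \<in> A \<Longrightarrow> t \<in> A \<Longrightarrow> dm s = cd t \<Longrightarrow> m (iv s) (m s t) = t"
  by (metis assoc cd_iv dm_iv idem_l idl iv_arr dm_mult cd_mult)
lemma rr[simp]: "s \<in> A \<Longrightarrow> t \<in> A \<Longrightarrow> dm s = dm t \<Longrightarrow> m (m s (iv t)) t = s"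
  by (metis assoc cd_iv dm_iv idem_l idr iv_arr cd_mult)

lemma iv_mult: "s \<in> A \<Longrightarrow> t \<in> A \<Longrightarrow> dm s = cd t \<Longrightarrow> iv (m s t) = m (iv t) (iv s)"
proof (rule inv_eq)
  assume a: "s \<in> A" "t \<in> A" "dm s = cd t"
  show "m s t \<in> A" using a by simp
  have e1: "m (m s t) (m (iv t) (iv s)) = m s (iv s)"
    using a by simp
  have e2: "m (m (iv t) (iv s)) (m s t) = m (iv t) t"
    using a by simp
  show "is_inv G (m s t) (m (iv t) (iv s))"
    unfolding is_inv_def using a
    apply (intro conjI)
        apply simp_all
    done
qed

lemma nat_le_eq: "nat_le G s t \<Longrightarrow> s = t"
  unfolding nat_le_def by (metis idr idem_dc)

end



locale slat =
  fixes X :: "('x,'p,'w) semigroupoid_scheme"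
  assumes sl: "semilatticeoid X"
begin

lemma isgX: "inverse_semigroupoid X" using sl unfolding semilatticeoid_def by auto
lemma sgX: "semigroupoid X" using isgX unfolding inverse_semigroupoid_def by auto
lemma all_idem: "x \<in> arr X \<Longrightarrow> idem X x" using sl unfolding semilatticeoid_def by auto
lemma xx: "x \<in> arr X \<Longrightarrow> mult X x x = x" using all_idem idem_def by metis
lemma xdc: "x \<in> arr X \<Longrightarrow> sdom X x = scod X x" using all_idem idem_def by metis

lemma Xmult_arr: "x \<in> arr X \<Longrightarrow> y \<in> arr X \<Longrightarrow> sdom X x = sdom X y \<Longrightarrow> mult X x y \<in> arr X
   \<and> sdom X (mult X x y) = sdom X x"
  using sgX xdc unfolding semigroupoid_def composable_def by metis
lemma Xassoc: "x \<in> arr X \<Longrightarrow> y \<in> arr X \<Longrightarrow> z \<in> arr X \<Longrightarrow> sdom X x = sdom X y \<Longrightarrow> sdom X y = sdom X z \<Longrightarrow>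
   mult X (mult X x y) z = mult X x (mult X y z)"
  using sgX xdc unfolding semigroupoid_def composable_def by metis

lemma Xinv_unique: "x \<in> arr X \<Longrightarrow> is_inv X x y \<Longrightarrow> is_inv X x z \<Longrightarrow> y = z"
  using isgX unfolding inverse_semigroupoid_def by blast

lemma Xxxz: "x \<in> arr X \<Longrightarrow> z \<in> arr X \<Longrightarrow> sdom X x = sdom X z \<Longrightarrow> mult X x (mult X x z) = mult X x z"
  using Xassoc xx by metis

lemma Xcomm: assumes "x \<in> arr X" "y \<in> arr X" "sdom X x = sdom X y"
  shows "mult X x y = mult X y x"
proof -
  have xy: "mult X x y \<in> arr X" "sdom X (mult X x y) = sdom X x"
   and yx: "mult X y x \<in> arr X" "sdom X (mult X y x) = sdom X x"
    using Xmult_arr assms by metis+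
  have aa: "mult X x (mult X x y) = mult X x y" "mult X y (mult X y x) = mult X y x"
    using Xassoc assms xx by metis+
  have xyxy: "mult X x (mult X y (mult X x y)) = mult X x y"
    using Xassoc[of x y "mult X x y"] xx[OF xy(1)] assms xy by metis
  have yxyx: "mult X y (mult X x (mult X y x)) = mult X y x"
    using Xassoc[of y x "mult X y x"] xx[OF yx(1)] assms yx by metis
  have "is_inv X (mult X x y) (mult X x y)"
    unfolding is_inv_def using xy xdc xx by metis
  moreover have "is_inv X (mult X x y) (mult X y x)"
  proof -
    have "mult X (mult X (mult X x y) (mult X y x)) (mult X x y) = mult X x (mult X y (mult X y (mult X x (mult X x y))))"
      using assms xy yx Xassoc Xmult_arr by metis
    also have "\<dots> = mult X x y" using aa xyxy Xxxz[of y "mult X x y"] xy assms by simp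
    finally have 1: "mult X (mult X (mult X x y) (mult X y x)) (mult X x y) = mult X x y" .
    have "mult X (mult X (mult X y x) (mult X x y)) (mult X y x) = mult X y (mult X x (mult X x (mult X y (mult X y x))))"
      using assms xy yx Xassoc Xmult_arr by metis
    also have "\<dots> = mult X y x" using aa yxyx Xxxz[of x "mult X y x"] yx assms by simp
    finally have 2: "mult X (mult X (mult X y x) (mult X x y)) (mult X y x) = mult X y x" .
    show ?thesis unfolding is_inv_def using xy yx xdc 1 2 by metis
  qed
  ultimately show ?thesis using Xinv_unique xy by metis
qed

lemma le_iff: "nat_le X x y \<longleftrightarrow> x \<in> arr X \<and> y \<in> arr X \<and> sdom X x = sdom X y \<and> mult X y x = x"
proof
  assume "nat_le X x y"
  then obtain e where e: "x \<in> arr X" "y \<in> arr X" "sdom X x = sdom X y" "idem X e"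
     "sdom X y = scod X e" "x = mult X y e"
    unfolding nat_le_def by blast
  have "mult X y x = mult X (mult X y y) e" using e Xassoc idem_def xdc by metis
  thus "x \<in> arr X \<and> y \<in> arr X \<and> sdom X x = sdom X y \<and> mult X y x = x" using e xx by metis
next
  assume "x \<in> arr X \<and> y \<in> arr X \<and> sdom X x = sdom X y \<and> mult X y x = x"
  thus "nat_le X x y" unfolding nat_le_def using all_idem xdc by metis
qed

lemma le_refl: "x \<in> arr X \<Longrightarrow> nat_le X x x" using le_iff xx by metis
lemma le_trans: "nat_le X x y \<Longrightarrow> nat_le X y z \<Longrightarrow> nat_le X x z"
  unfolding le_iff by (metis Xassoc)
lemma le_antisym: "nat_le X x y \<Longrightarrow> nat_le X y x \<Longrightarrow> x = y"
  unfolding le_iff by (metis Xcomm)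
lemma le_arr: "nat_le X x y \<Longrightarrow> x \<in> arr X \<and> y \<in> arr X" unfolding le_iff by auto

end




lemma sl_transport:
  fixes S :: "('x,'p,'w) semigroupoid_scheme" and f :: "'x \<Rightarrow> 'e"
  assumes "semilatticeoid S" and inj: "inj_on f (arr S)"
  shows "\<exists>T :: ('e,'e) semigroupoid. semilatticeoid T \<and> arr T = f ` arr S \<and>
     (\<forall>x\<in>arr S. \<forall>y\<in>arr S. nat_le T (f x) (f y) \<longleftrightarrow> nat_le S x y)"
proof -
  interpret slat S by standard fact
  define g where "g = inv_into (arr S) f"
  define ob where "ob = (\<lambda>p. f (SOME x. x \<in> arr S \<and> sdom S x = p))"
  define T :: "('e,'e) semigroupoid" where "T = \<lparr>arr = f ` arr S, obj = ob ` obj S,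
     sdom = \<lambda>a. ob (sdom S (g a)), scod = \<lambda>a. ob (sdom S (g a)),
     mult = \<lambda>a b. f (mult S (g a) (g b))\<rparr>"
  have gf: "x \<in> arr S \<Longrightarrow> g (f x) = x" for x unfolding g_def using inj by simp
  have obinj: "x \<in> arr S \<Longrightarrow> y \<in> arr S \<Longrightarrow> ob (sdom S x) = ob (sdom S y) \<longleftrightarrow> sdom S x = sdom S y" for x y
  proof
    assume a: "x \<in> arr S" "y \<in> arr S" "ob (sdom S x) = ob (sdom S y)"
    define x' where "x' = (SOME z. z \<in> arr S \<and> sdom S z = sdom S x)"
    define y' where "y' = (SOME z. z \<in> arr S \<and> sdom S z = sdom S y)"
    have x': "x' \<in> arr S \<and> sdom S x' = sdom S x" unfolding x'_def by (rule someI[of _ x]) (use a in auto)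
    have y': "y' \<in> arr S \<and> sdom S y' = sdom S y" unfolding y'_def by (rule someI[of _ y]) (use a in auto)
    have "f x' = f y'" using a(3) unfolding ob_def x'_def y'_def by simp
    hence "x' = y'" using inj x' y' inj_on_def by metis
    thus "sdom S x = sdom S y" using x' y' by simp
  qed simp
  have arrT: "arr T = f ` arr S" unfolding T_def by simp
  have sdT: "x \<in> arr S \<Longrightarrow> sdom T (f x) = ob (sdom S x)" for x unfolding T_def using gf by simp
  have scT: "x \<in> arr S \<Longrightarrow> scod T (f x) = ob (sdom S x)" for x unfolding T_def using gf by simp
  have mT: "x \<in> arr S \<Longrightarrow> y \<in> arr S \<Longrightarrow> mult T (f x) (f y) = f (mult S x y)" for x y
    unfolding T_def using gf by simp
  have compT: "x \<in> arr S \<Longrightarrow> y \<in> arr S \<Longrightarrow> composable T (f x) (f y) \<longleftrightarrow> sdom S x = sdom S y" for x y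
    unfolding composable_def using arrT sdT scT obinj by auto
  have sgT: "semigroupoid T"
    unfolding semigroupoid_def
  proof (intro conjI allI ballI impI)
    fix s assume "s \<in> arr T"
    then obtain x where "x \<in> arr S" "s = f x" using arrT by auto
    moreover have "sdom S x \<in> obj S" using sgX \<open>x \<in> arr S\<close> unfolding semigroupoid_def by blast
    moreover have "obj T = ob ` obj S" unfolding T_def by simp
    ultimately show "sdom T s \<in> obj T" "scod T s \<in> obj T" using sdT scT by auto
  next
    fix s t assume "composable T s t"
    moreover then obtain x y where xy: "x \<in> arr S" "y \<in> arr S" "s = f x" "t = f y"
      using arrT unfolding composable_def by blast
    ultimately have xy: "x \<in> arr S" "y \<in> arr S" "s = f x" "t = f y" "sdom S x = sdom S y"
      using compT by auto
    then show "mult T s t \<in> arr T" "sdom T (mult T s t) = sdom T t" "scod T (mult T s t) = scod T s"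
      using mT Xmult_arr arrT sdT scT by auto
  next
    fix s t u assume "composable T s t \<and> composable T t u"
    moreover then obtain x y z where xy: "x \<in> arr S" "y \<in> arr S" "z \<in> arr S" "s = f x" "t = f y" "u = f z"
      using arrT unfolding composable_def by blast
    ultimately have xy: "x \<in> arr S" "y \<in> arr S" "z \<in> arr S" "s = f x" "t = f y" "u = f z"
         "sdom S x = sdom S y" "sdom S y = sdom S z"
      using compT by auto
    then show "mult T (mult T s t) u = mult T s (mult T t u)"
      using Xmult_arr[of x y] Xmult_arr[of y z] by (simp add: mT Xassoc)
  qed
  have m3: "x \<in> arr S \<Longrightarrow> y \<in> arr S \<Longrightarrow> sdom S x = sdom S y \<Longrightarrow>
     mult T (mult T (f x) (f y)) (f x) = f (mult S (mult S x y) x)" for x y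
    using Xmult_arr[of x y] by (simp add: mT)
  have finj: "a \<in> arr S \<Longrightarrow> b \<in> arr S \<Longrightarrow> f a = f b \<longleftrightarrow> a = b" for a b
    using inj unfolding inj_on_def by blast
  have invT: "x \<in> arr S \<Longrightarrow> y \<in> arr S \<Longrightarrow> is_inv T (f x) (f y) \<longleftrightarrow> is_inv S x y" for x y
  proof -
    assume x: "x \<in> arr S" and y: "y \<in> arr S"
    have "is_inv T (f x) (f y) \<longleftrightarrow> sdom S x = sdom S y \<and> mult T (mult T (f x) (f y)) (f x) = f x
        \<and> mult T (mult T (f y) (f x)) (f y) = f y"
      unfolding is_inv_def using x y sdT scT obinj arrT by auto
    also have "\<dots> \<longleftrightarrow> sdom S x = sdom S y \<and> mult S (mult S x y) x = x \<and> mult S (mult S y x) y = y"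
      using m3[OF x y] m3[OF y x] x y Xmult_arr finj by (smt (verit))
    also have "\<dots> \<longleftrightarrow> is_inv S x y" unfolding is_inv_def using x y xdc by auto
    finally show ?thesis .
  qed
  have isgT: "inverse_semigroupoid T"
    unfolding inverse_semigroupoid_def
  proof (intro conjI sgT ballI)
    fix s assume "s \<in> arr T"
    then obtain x where x: "x \<in> arr S" "s = f x" using arrT by auto
    have ii: "is_inv S x x" unfolding is_inv_def using x xx xdc by metis
    show "\<exists>!s'. is_inv T s s'"
    proof
      show "is_inv T s s" using invT x ii by auto
    next
      fix b assume "is_inv T s b"
      moreover hence "b \<in> arr T" unfolding is_inv_def by auto
      ultimately obtain y where "y \<in> arr S" "b = f y" "is_inv S x y" using invT x arrT by auto
      thus "b = s" using ii Xinv_unique x by metis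
    qed
  qed
  have slT: "semilatticeoid T" unfolding semilatticeoid_def
  proof (intro conjI isgT ballI)
    fix s assume "s \<in> arr T"
    then obtain x where x: "x \<in> arr S" "s = f x" using arrT by auto
    show "idem T s" unfolding idem_def using x arrT sdT scT mT xx by auto
  qed
  have leT: "x \<in> arr S \<Longrightarrow> y \<in> arr S \<Longrightarrow> nat_le T (f x) (f y) \<longleftrightarrow> nat_le S x y" for x y
  proof -
    assume x: "x \<in> arr S" and y: "y \<in> arr S"
    interpret T: slat T by standard fact
    have "nat_le T (f x) (f y) \<longleftrightarrow> sdom S x = sdom S y \<and> f (mult S y x) = f x"
      using T.le_iff x y arrT sdT mT obinj by auto
    also have "\<dots> \<longleftrightarrow> sdom S x = sdom S y \<and> mult S y x = x"
      using inj x y Xmult_arr inj_on_def by metis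
    also have "\<dots> \<longleftrightarrow> nat_le S x y" using le_iff x y by auto
    finally show ?thesis .
  qed
  show ?thesis using slT arrT leT by blast
qed




locale glob = grpd G + slat X
  for G :: "('a,'o,'z) semigroupoid_scheme" and X :: "('x,'p,'w) semigroupoid_scheme" +
  fixes Xd :: "'a \<Rightarrow> 'x set" and th :: "'a \<Rightarrow> 'x \<Rightarrow> 'x"
  assumes opa: "ordered_partial_action G (arr X) (nat_le X) Xd th"
    and ne: "\<forall>g\<in>arr G. Xd g \<noteq> {}"
begin

abbreviation "le \<equiv> nat_le X"

lemma pa: "partial_action G (arr X) Xd th" using opa ordered_partial_action_def by blast
lemma oc: "ordered_action_cond G (arr X) (nat_le X) Xd th" using opa ordered_partial_action_def by blast

lemma Xd_arr: "s \<in> A \<Longrightarrow> x \<in> Xd s \<Longrightarrow> x \<in> arr X" using pa unfolding partial_action_def by blast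
lemma th_bij: "s \<in> A \<Longrightarrow> bij_betw (th s) (Xd (iv s)) (Xd s)" using pa unfolding partial_action_def by blast
lemma th_in: "s \<in> A \<Longrightarrow> x \<in> Xd (iv s) \<Longrightarrow> th s x \<in> Xd s" using th_bij bij_betw_apply by metis
lemma th_inv: "s \<in> A \<Longrightarrow> x \<in> Xd (iv s) \<Longrightarrow> th (iv s) (th s x) = x" using pa unfolding partial_action_def by blast
lemma th_inv2: "s \<in> A \<Longrightarrow> x \<in> Xd s \<Longrightarrow> th s (th (iv s) x) = x" using th_inv[of "iv s" x] by simp
lemma X_union: "x \<in> arr X \<Longrightarrow> \<exists>s\<in>A. x \<in> Xd s" using pa unfolding partial_action_def by blast
lemma th_comp: "s \<in> A \<Longrightarrow> t \<in> A \<Longrightarrow> dm s = cd t \<Longrightarrow> x \<in> Xd (iv t) \<Longrightarrow> th t x \<in> Xd (iv s) \<Longrightarrow>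
   x \<in> Xd (iv (m s t)) \<and> th (m s t) x = th s (th t x)"
  using pa unfolding partial_action_def composable_def by blast
lemma ideal: "s \<in> A \<Longrightarrow> x \<in> Xd s \<Longrightarrow> le y x \<Longrightarrow> y \<in> Xd s"
  using oc le_arr unfolding ordered_action_cond_def order_ideal_def by blast
lemma mono: "s \<in> A \<Longrightarrow> x \<in> Xd (iv s) \<Longrightarrow> y \<in> Xd (iv s) \<Longrightarrow> le x y \<longleftrightarrow> le (th s x) (th s y)"
  using oc unfolding ordered_action_cond_def by blast

lemma th_idem: assumes e: "idem G e" and x: "x \<in> Xd e" shows "th e x = x"
proof -
  have eA: "e \<in> A" and ie: "iv e = e" and ee: "m e e = e" and dc: "dm e = cd e"
    using e idem_arr iv_idem idem_def by metis+
  have 1: "th e x \<in> Xd e" using th_in[OF eA] x ie by simp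
  have "th (m e e) x = th e (th e x)" using th_comp[OF eA eA dc] x 1 ie by simp
  hence "th e (th e x) = th e x" using ee by simp
  moreover have "inj_on (th e) (Xd e)" using th_bij[OF eA] ie bij_betw_def by metis
  ultimately show ?thesis using x 1 inj_on_def by metis
qed

lemma Xd_sub: assumes s: "s \<in> A" and x: "x \<in> Xd s" shows "x \<in> Xd (m s (iv s))"
proof -
  have "th (iv s) x \<in> Xd (iv s)" using th_in[of "iv s" x] s x by simp
  hence "x \<in> Xd (iv (m s (iv s)))" using th_comp[of s "iv s" x] s x by simp
  thus ?thesis using iv_idem idem_r s by metis
qed

abbreviation "D \<equiv> glD G X Xd"
abbreviation "Rx \<equiv> glapprox G X Xd th"
abbreviation "cl \<equiv> glcls G X Xd th"
abbreviation "EE \<equiv> glE G X Xd th"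

lemma D_iff: "(s,x) \<in> D \<longleftrightarrow> s \<in> A \<and> x \<in> Xd (m (iv s) s)"
  unfolding glD_def using Xd_arr by (auto intro: Xd_arr[of "m (iv s) s"])

definition R1 where "R1 s x t y \<longleftrightarrow> s \<in> A \<and> t \<in> A \<and> cd s = cd t \<and> x \<in> Xd (m (iv s) t) \<and> th (m (iv t) s) x = y"
definition IR where "IR s x t y \<longleftrightarrow> s \<in> A \<and> t \<in> A \<and> x \<in> Xd (iv s) \<and> y \<in> Xd (iv t) \<and> th s x = th t y"
definition rl where "rl s x t y \<longleftrightarrow> R1 s x t y \<or> IR s x t y"

lemma ivm: "s \<in> A \<Longrightarrow> t \<in> A \<Longrightarrow> cd s = cd t \<Longrightarrow> iv (m (iv t) s) = m (iv s) t"
  by (simp add: iv_mult)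

lemma R1_sym: "R1 s x t y \<Longrightarrow> R1 t y s x"
proof -
  assume "R1 s x t y"
  hence a: "s \<in> A" "t \<in> A" "cd s = cd t" "x \<in> Xd (m (iv s) t)" "th (m (iv t) s) x = y" unfolding R1_def by auto
  have u: "m (iv t) s \<in> A" using a by simp
  have x: "x \<in> Xd (iv (m (iv t) s))" using a ivm by simp
  have "y \<in> Xd (m (iv t) s)" using th_in[OF u x] a by simp
  moreover have "th (m (iv s) t) y = x" using th_inv[OF u x] a ivm by simp
  ultimately show ?thesis using a unfolding R1_def by simp
qed

lemma R1_img: assumes r: "R1 s x t y" and x: "x \<in> Xd (iv s)" shows "y \<in> Xd (iv t) \<and> th t y = th s x"
proof -
  have a: "s \<in> A" "t \<in> A" "cd s = cd t" "y \<in> Xd (m (iv t) s)" "th (m (iv s) t) y = x"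
    using R1_sym[OF r] unfolding R1_def by auto
  have "y \<in> Xd (iv (m s (m (iv s) t))) \<and> th (m s (m (iv s) t)) y = th s (th (m (iv s) t) y)"
    using th_comp[of s "m (iv s) t" y] a x ivm by auto
  thus ?thesis using a by simp
qed

lemma R1_trans: "R1 s x t y \<Longrightarrow> R1 t y r z \<Longrightarrow> R1 s x r z"
proof -
  assume r1: "R1 s x t y" and r2: "R1 t y r z"
  have a: "s \<in> A" "t \<in> A" "r \<in> A" "cd s = cd t" "cd t = cd r" "x \<in> Xd (m (iv s) t)" "th (m (iv t) s) x = y"
    "y \<in> Xd (m (iv t) r)" "th (m (iv r) t) y = z" using r1 r2 unfolding R1_def by auto
  have "x \<in> Xd (iv (m (m (iv r) t) (m (iv t) s))) \<and> th (m (m (iv r) t) (m (iv t) s)) x = th (m (iv r) t) (th (m (iv t) s) x)"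
    by (rule th_comp) (use a ivm in auto)
  moreover have "m (m (iv r) t) (m (iv t) s) = m (iv r) s" using a by simp
  ultimately show ?thesis using a ivm unfolding R1_def by auto
qed

lemma R1_refl: "(s,x) \<in> D \<Longrightarrow> R1 s x s x"
  unfolding R1_def D_iff using th_idem idem_l by auto

lemma R1_same: "R1 p x p y \<Longrightarrow> y = x"
  unfolding R1_def using th_idem idem_l by auto

lemma rl_sym: "rl s x t y \<Longrightarrow> rl t y s x"
  unfolding rl_def IR_def by (auto dest: R1_sym)

lemma rl_trans: "rl s x t y \<Longrightarrow> rl t y r z \<Longrightarrow> rl s x r z"
proof -
  assume h1: "rl s x t y" and h2: "rl t y r z"
  show ?thesis
  proof (cases "R1 s x t y")
    case True
    show ?thesis
    proof (cases "R1 t y r z")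
      case True thus ?thesis using R1_trans \<open>R1 s x t y\<close> rl_def by blast
    next
      case False
      hence "IR t y r z" using h2 rl_def by blast
      moreover have "x \<in> Xd (iv s) \<and> th s x = th t y" using R1_img[OF R1_sym[OF True]] calculation IR_def by blast
      ultimately show ?thesis unfolding rl_def IR_def using True R1_def by auto
    qed
  next
    case False
    hence i1: "IR s x t y" using h1 rl_def by blast
    show ?thesis
    proof (cases "R1 t y r z")
      case True
      have "z \<in> Xd (iv r) \<and> th r z = th t y" using R1_img[OF True] i1 IR_def by blast
      thus ?thesis using i1 True unfolding rl_def IR_def R1_def by auto
    next
      case False
      hence "IR t y r z" using h2 rl_def by blast
      thus ?thesis using i1 unfolding rl_def IR_def by auto
    qed
  qed
qed

lemma sim_rl: assumes "(s,x) \<in> D" "(t,y) \<in> D" "gl_sim G Xd th (s,x) (t,y)" shows "rl s x t y"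
proof -
  have d: "s \<in> A" "t \<in> A" "x \<in> Xd (m (iv s) s)" "y \<in> Xd (m (iv t) t)" using assms(1,2) D_iff by auto
  from assms(3) consider "composable G (iv t) s \<and> x \<in> Xd (m (iv s) t) \<and> th (m (iv t) s) x = y"
    | "idem G s \<and> idem G t \<and> x = y" unfolding gl_sim_def by auto
  thus ?thesis
  proof cases
    case 1 thus ?thesis using d unfolding rl_def R1_def composable_def by auto
  next
    case 2
    hence "iv s = s" "iv t = t" "m s s = s" "m t t = t" using iv_idem idem_def by metis+
    thus ?thesis using 2 d th_idem unfolding rl_def IR_def by auto
  qed
qed

definition rlp where "rlp a b \<longleftrightarrow> rl (fst a) (snd a) (fst b) (snd b)"

lemma glrel_rlp: "(a,b) \<in> glrel G X Xd th \<Longrightarrow> a \<in> D \<and> b \<in> D \<and> rlp a b"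
  unfolding glrel_def rlp_def using sim_rl by (cases a, cases b) auto

lemma approx_D: "(a,b) \<in> Rx \<Longrightarrow> a \<in> D \<and> b \<in> D" unfolding glapprox_def by auto

lemma approx_rlp: assumes "(a,b) \<in> Rx" shows "rlp a b"
proof -
  have ab: "(a,b) \<in> (glrel G X Xd th \<union> (glrel G X Xd th)\<inverse>)\<^sup>*" and aD: "a \<in> D"
    using assms unfolding glapprox_def by auto
  have "a = b \<or> rlp a b" using ab
  proof (induction rule: rtrancl_induct)
    case base thus ?case by simp
  next
    case (step b c)
    have "rlp b c"
    proof (cases "(b,c) \<in> glrel G X Xd th")
      case True thus ?thesis using glrel_rlp by blast
    next
      case False
      hence "(c,b) \<in> glrel G X Xd th" using step(2) by blast
      hence "rlp c b" using glrel_rlp by blast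
      thus ?thesis unfolding rlp_def by (rule rl_sym)
    qed
    moreover have "rlp a b \<Longrightarrow> rlp b c \<Longrightarrow> rlp a c" unfolding rlp_def by (rule rl_trans)
    ultimately show ?case using step(3) by blast
  qed
  moreover have "rlp a a" using aD R1_refl rl_def rlp_def by (cases a) auto
  ultimately show ?thesis by auto
qed

lemma approx_intro: assumes "(s,x) \<in> D" "(t,y) \<in> D" "rl s x t y" shows "((s,x),(t,y)) \<in> Rx"
proof -
  let ?r = "glrel G X Xd th"
  have d: "s \<in> A" "t \<in> A" "x \<in> Xd (m (iv s) s)" "y \<in> Xd (m (iv t) t)" using assms(1,2) D_iff by auto
  have "((s,x),(t,y)) \<in> (?r \<union> ?r\<inverse>)\<^sup>*"
  proof (cases "R1 s x t y")
    case True
    hence "((s,x),(t,y)) \<in> ?r" using assms unfolding glrel_def gl_sim_def R1_def composable_def by auto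
    thus ?thesis by auto
  next
    case False
    hence i: "IR s x t y" using assms rl_def by blast
    have gen: "((p,w),(m p (iv p), th p w)) \<in> ?r \<and> (m p (iv p), th p w) \<in> D"
      if p: "p \<in> A" "(p,w) \<in> D" "w \<in> Xd (iv p)" for p w
    proof -
      have ie: "iv (m p (iv p)) = m p (iv p)" using iv_idem idem_r p by metis
      have "th p w \<in> Xd (m p (iv p))" using Xd_sub th_in p by metis
      hence D2: "(m p (iv p), th p w) \<in> D" using D_iff p ie idem_r idem_def by metis
      moreover have "gl_sim G Xd th (p,w) (m p (iv p), th p w)"
        unfolding gl_sim_def composable_def using p ie idl[OF idem_r] by auto
      ultimately show ?thesis using p unfolding glrel_def by auto
    qed
    have z: "th s x = th t y" using i IR_def by auto
    have 1: "((s,x),(m s (iv s), th s x)) \<in> ?r" "(m s (iv s), th s x) \<in> D"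
      using gen[of s x] d assms i IR_def by auto
    have 2: "((t,y),(m t (iv t), th s x)) \<in> ?r" "(m t (iv t), th s x) \<in> D"
      using gen[of t y] d assms i IR_def z by auto
    have 3: "((m s (iv s), th s x),(m t (iv t), th s x)) \<in> ?r"
      using 1(2) 2(2) d unfolding glrel_def gl_sim_def by auto
    have "((s,x),(m s (iv s), th s x)) \<in> (?r \<union> ?r\<inverse>)\<^sup>*" using 1 by auto
    also have "((m s (iv s), th s x),(m t (iv t), th s x)) \<in> (?r \<union> ?r\<inverse>)\<^sup>*" using 3 by auto
    also have "((m t (iv t), th s x),(t,y)) \<in> (?r \<union> ?r\<inverse>)\<^sup>*" using 2 by auto
    finally show ?thesis .
  qed
  thus ?thesis using assms unfolding glapprox_def by auto
qed

lemma approx_iff: "((s,x),(t,y)) \<in> Rx \<longleftrightarrow> (s,x) \<in> D \<and> (t,y) \<in> D \<and> rl s x t y"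
proof
  assume h: "((s,x),(t,y)) \<in> Rx"
  show "(s,x) \<in> D \<and> (t,y) \<in> D \<and> rl s x t y" using approx_D[OF h] approx_rlp[OF h] unfolding rlp_def by simp
next
  assume "(s,x) \<in> D \<and> (t,y) \<in> D \<and> rl s x t y" thus "((s,x),(t,y)) \<in> Rx" using approx_intro by blast
qed

lemma approx_refl: "a \<in> D \<Longrightarrow> (a,a) \<in> Rx"
proof -
  assume a: "a \<in> D"
  obtain s x where sx: "a = (s,x)" by (cases a) auto
  have "rl s x s x" using R1_refl a sx rl_def by blast
  thus ?thesis using approx_intro a sx by blast
qed

lemma approx_equiv: "equiv D Rx"
proof (rule equivI)
  show "Rx \<subseteq> D \<times> D" unfolding glapprox_def by (rule Int_lower2)
  show "refl_on D Rx" unfolding refl_on_def using approx_refl by blast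
  show "sym Rx" unfolding sym_def
  proof (intro allI impI)
    fix a b assume h: "(a,b) \<in> Rx"
    obtain s x t y where ab: "a = (s,x)" "b = (t,y)" by (cases a; cases b) auto
    have "(s,x) \<in> D" "(t,y) \<in> D" "rl s x t y" using h ab approx_iff by auto
    thus "(b,a) \<in> Rx" using ab approx_iff rl_sym by blast
  qed
  show "trans Rx" unfolding trans_def
  proof (intro allI impI)
    fix a b c assume h: "(a,b) \<in> Rx" "(b,c) \<in> Rx"
    obtain s x t y r z where abc: "a = (s,x)" "b = (t,y)" "c = (r,z)" by (cases a; cases b; cases c) auto
    have "(s,x) \<in> D" "(r,z) \<in> D" "rl s x t y" "rl t y r z" using h abc approx_iff by auto
    thus "(a,c) \<in> Rx" using abc approx_iff rl_trans by blast
  qed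
qed

lemma same_cod: assumes "((s,x),(t,y)) \<in> Rx" "cd s = cd t" shows "R1 s x t y"
proof -
  have "rl s x t y" using assms approx_iff by auto
  moreover
  { assume i: "IR s x t y"
    have a: "s \<in> A" "t \<in> A" "x \<in> Xd (iv s)" "y \<in> Xd (iv t)" "th s x = th t y" using i IR_def by auto
    have "x \<in> Xd (iv (m (iv t) s)) \<and> th (m (iv t) s) x = th (iv t) (th s x)"
      using th_comp[of "iv t" s x] a th_in[of t y] assms(2) by simp
    hence "R1 s x t y" using a th_inv assms(2) ivm unfolding R1_def by auto }
  ultimately show ?thesis unfolding rl_def by blast
qed

lemma approx_img: assumes "((s,x),(t,y)) \<in> Rx" "x \<in> Xd (iv s)" shows "y \<in> Xd (iv t) \<and> th t y = th s x"
proof -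
  have "rl s x t y" using assms approx_iff by auto
  thus ?thesis using R1_img assms(2) unfolding rl_def IR_def by auto
qed

end



context glob begin

abbreviation "LE \<equiv> glle G X Xd th"
abbreviation "Es \<equiv> glEs G X Xd th"
abbreviation "et \<equiv> gleta G X Xd th"
abbreviation "gi \<equiv> gli G X Xd th"

lemma in_cl: "b \<in> cl a \<longleftrightarrow> (a,b) \<in> Rx" unfolding glcls_def by auto
lemma cl_self: "a \<in> D \<Longrightarrow> a \<in> cl a" using in_cl approx_refl by blast
lemma cl_eq: "a \<in> D \<Longrightarrow> b \<in> D \<Longrightarrow> cl a = cl b \<longleftrightarrow> (a,b) \<in> Rx"
  unfolding glcls_def using eq_equiv_class_iff[OF approx_equiv] by blast
lemma E_iff: "C \<in> EE \<longleftrightarrow> (\<exists>a\<in>D. C = cl a)"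
  unfolding glE_def quotient_def glcls_def by auto
lemma E_mem: "C \<in> EE \<Longrightarrow> a \<in> C \<Longrightarrow> C = cl a"
proof -
  assume C: "C \<in> EE" and a: "a \<in> C"
  then obtain c where c: "c \<in> D" "C = cl c" using E_iff by blast
  hence ca: "(c,a) \<in> Rx" using a in_cl by blast
  thus ?thesis using cl_eq c approx_D by blast
qed
lemma E_rel: "C \<in> EE \<Longrightarrow> a \<in> C \<Longrightarrow> b \<in> C \<Longrightarrow> (a,b) \<in> Rx"
  using E_mem in_cl by blast
lemma E_D: "C \<in> EE \<Longrightarrow> a \<in> C \<Longrightarrow> a \<in> D"
  using E_rel approx_D by blast
lemma cl_E: "a \<in> D \<Longrightarrow> cl a \<in> EE" using E_iff by blast

lemma D_le: "(p,y) \<in> D \<Longrightarrow> le x y \<Longrightarrow> (p,x) \<in> D"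
proof -
  assume a: "(p,y) \<in> D" "le x y"
  hence "p \<in> A" "y \<in> Xd (m (iv p) p)" using D_iff by auto
  moreover hence "m (iv p) p \<in> A" by simp
  ultimately show ?thesis using ideal a(2) D_iff by blast
qed

lemma D_Xd: "(p,y) \<in> D \<Longrightarrow> y \<in> arr X"
proof -
  assume a: "(p,y) \<in> D"
  hence "p \<in> A" "y \<in> Xd (m (iv p) p)" using D_iff by auto
  moreover hence "m (iv p) p \<in> A" by simp
  ultimately show ?thesis using Xd_arr by blast
qed

lemma transport: assumes r: "((r,y'),(p,y)) \<in> Rx" and l: "le x' y'"
  shows "\<exists>x''. le x'' y \<and> ((r,x'),(p,x'')) \<in> Rx"
proof -
  have rD: "(r,y') \<in> D" and pD: "(p,y) \<in> D" and rl: "rl r y' p y" using r approx_iff by auto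
  have rA: "r \<in> A" and pA: "p \<in> A" using rD pD D_iff by auto
  have x'D: "(r,x') \<in> D" using D_le rD l by blast
  show ?thesis
  proof (cases "R1 r y' p y")
    case True
    hence a: "cd r = cd p" "y' \<in> Xd (m (iv r) p)" "th (m (iv p) r) y' = y" unfolding R1_def by auto
    let ?u = "m (iv p) r"
    have uA: "?u \<in> A" and iu: "iv ?u = m (iv r) p" using a rA pA ivm by auto
    have x'u: "x' \<in> Xd (m (iv r) p)" using ideal[of "m (iv r) p" y' x'] a l rA pA by simp
    have lx: "le (th ?u x') y" using mono[OF uA, of x' y'] iu x'u a l by simp
    have "(p, th ?u x') \<in> D" using D_le pD lx by blast
    moreover have "R1 r x' p (th ?u x')" unfolding R1_def using rA pA a x'u by auto
    ultimately show ?thesis using lx x'D approx_intro rl_def by blast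
  next
    case False
    hence a: "y' \<in> Xd (iv r)" "y \<in> Xd (iv p)" "th r y' = th p y" using rl rl_def IR_def by auto
    have x'r: "x' \<in> Xd (iv r)" using ideal[of "iv r" y' x'] a l rA by simp
    have w1: "le (th r x') (th r y')" using mono[OF rA] x'r a l by blast
    have tpy: "th p y \<in> Xd p" using th_in pA a by blast
    have wp: "th r x' \<in> Xd p" using ideal[OF pA tpy] w1 a by simp
    let ?x = "th (iv p) (th r x')"
    have "le ?x (th (iv p) (th p y))" using mono[of "iv p" "th r x'" "th p y"] pA wp tpy w1 a by simp
    hence lx: "le ?x y" using th_inv pA a by simp
    have xin: "?x \<in> Xd (iv p)" using th_in[of "iv p"] pA wp by simp
    have "(p, ?x) \<in> D" using D_le pD lx by blast
    moreover have "IR r x' p ?x" unfolding IR_def using rA pA x'r xin th_inv2 pA wp by simp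
    ultimately show ?thesis using lx x'D approx_intro rl_def by blast
  qed
qed

lemma le_intro: assumes "(p,y) \<in> D" "le x y" shows "LE (cl (p,x)) (cl (p,y))"
proof -
  have "(p,x) \<in> D" using D_le assms by blast
  thus ?thesis unfolding glle_def using assms cl_self le_arr by blast
qed

lemma le_elim: assumes C: "C \<in> EE" and C': "C' \<in> EE" and l: "LE C C'" and py: "(p,y) \<in> C'"
  shows "\<exists>x. le x y \<and> (p,x) \<in> C"
proof -
  obtain r y' x' where w: "(r,y') \<in> C'" "le x' y'" "(r,x') \<in> C"
    using l unfolding glle_def by blast
  have "((r,y'),(p,y)) \<in> Rx" using E_rel C' w py by blast
  then obtain x'' where "le x'' y" "((r,x'),(p,x'')) \<in> Rx" using transport w by blast
  moreover have "C = cl (r,x')" using E_mem C w by blast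
  ultimately show ?thesis using in_cl by blast
qed

lemma E_rep: "C \<in> EE \<Longrightarrow> \<exists>p x. (p,x) \<in> D \<and> C = cl (p,x) \<and> (p,x) \<in> C"
  using E_iff cl_self by fastforce

lemma poset: "poset_on EE LE"
  unfolding poset_on_def
proof (intro conjI ballI impI)
  fix C assume C: "C \<in> EE"
  then obtain p x where "(p,x) \<in> D" "C = cl (p,x)" using E_rep by blast
  thus "LE C C" using le_intro le_refl D_Xd by blast
next
  fix C C' assume C: "C \<in> EE" and C': "C' \<in> EE" and l: "LE C C' \<and> LE C' C"
  obtain p y where py: "(p,y) \<in> D" "C' = cl (p,y)" "(p,y) \<in> C'" using E_rep C' by blast
  obtain x where x: "le x y" "(p,x) \<in> C" using le_elim C C' l py by blast
  obtain z where z: "le z x" "(p,z) \<in> C'" using le_elim C' C l x by blast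
  have "R1 p z p y" using same_cod E_rel C' z py by blast
  hence "y = z" using R1_same by blast
  hence "x = y" using le_antisym x z by blast
  thus "C = C'" using E_mem C x py by blast
next
  fix C1 C2 C3 assume C: "C1 \<in> EE" "C2 \<in> EE" "C3 \<in> EE" and l: "LE C1 C2 \<and> LE C2 C3"
  obtain p z where pz: "(p,z) \<in> D" "C3 = cl (p,z)" "(p,z) \<in> C3" using E_rep C by blast
  obtain y where y: "le y z" "(p,y) \<in> C2" using le_elim C l pz by blast
  obtain x where x: "le x y" "(p,x) \<in> C1" using le_elim C l y by blast
  have "LE (cl (p,x)) (cl (p,z))" using le_intro pz le_trans x y by blast
  moreover have "C1 = cl (p,x)" using E_mem C x by blast
  ultimately show "LE C1 C3" using pz by simp
qed

lemma Ds_iff: assumes s: "s \<in> A" shows "(p,x) \<in> glDs G X Xd s \<longleftrightarrow> (p,x) \<in> D \<and> cd p = cd s"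
proof -
  have 1: "(p,x) \<in> glDs G X Xd s \<longleftrightarrow> (p,x) \<in> D \<and> composable G (iv s) p \<and> x \<in> Xd (m (m (m (iv p) s) (iv s)) p)"
    unfolding glDs_def by simp
  show ?thesis
  proof
    assume "(p,x) \<in> glDs G X Xd s"
    hence "(p,x) \<in> D" "composable G (iv s) p" using 1 by auto
    thus "(p,x) \<in> D \<and> cd p = cd s" using s unfolding composable_def by simp
  next
    assume a: "(p,x) \<in> D \<and> cd p = cd s"
    hence pA: "p \<in> A" and xD: "x \<in> Xd (m (iv p) p)" using D_iff by auto
    have "m (m (m (iv p) s) (iv s)) p = m (iv p) p" using s pA a by simp
    moreover have "composable G (iv s) p" unfolding composable_def using s pA a by simp
    ultimately show "(p,x) \<in> glDs G X Xd s" using 1 a xD by simp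
  qed
qed

lemma Es_iff: assumes s: "s \<in> A" shows "C \<in> Es s \<longleftrightarrow> (\<exists>p x. (p,x) \<in> D \<and> cd p = cd s \<and> C = cl (p,x))"
proof -
  have "C \<in> Es s \<longleftrightarrow> (\<exists>a. a \<in> glDs G X Xd s \<and> C = cl a)" unfolding glEs_def by blast
  also have "\<dots> \<longleftrightarrow> (\<exists>p x. (p,x) \<in> glDs G X Xd s \<and> C = cl (p,x))" by auto
  also have "\<dots> \<longleftrightarrow> (\<exists>p x. (p,x) \<in> D \<and> cd p = cd s \<and> C = cl (p,x))"
    by (simp only: Ds_iff[OF s] conj_assoc)
  finally show ?thesis .
qed

lemma Es_intro: "s \<in> A \<Longrightarrow> (p,x) \<in> D \<Longrightarrow> cd p = cd s \<Longrightarrow> cl (p,x) \<in> Es s"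
  using Es_iff by blast

lemma Es_E: assumes s: "s \<in> A" shows "Es s \<subseteq> EE"
proof
  fix C assume "C \<in> Es s"
  then obtain p x where "(p,x) \<in> D" "C = cl (p,x)" using Es_iff[OF s] by blast
  thus "C \<in> EE" using cl_E by blast
qed

lemma Es_cod: assumes "s \<in> A" "t \<in> A" "cd s = cd t" shows "Es s = Es t"
proof (rule set_eqI)
  fix C show "C \<in> Es s \<longleftrightarrow> C \<in> Es t" using Es_iff[OF assms(1), of C] Es_iff[OF assms(2), of C] assms(3) by simp
qed

lemma Es_mem: assumes "s \<in> A" "C \<in> EE" "(p,x) \<in> C" "cd p = cd s" shows "C \<in> Es s"
proof -
  have "C = cl (p,x)" "(p,x) \<in> D" using E_mem E_D assms by blast+
  thus ?thesis using Es_intro assms by simp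
qed

lemma mult_D: assumes s: "s \<in> A" and pD: "(p,x) \<in> D" and c: "cd p = dm s" shows "(m s p, x) \<in> D"
proof -
  have pA: "p \<in> A" and xD: "x \<in> Xd (m (iv p) p)" using pD D_iff by auto
  have "m (iv (m s p)) (m s p) = m (iv p) p" using s pA c by (simp add: iv_mult)
  moreover have "m s p \<in> A" using s pA c by simp
  ultimately show ?thesis using xD D_iff by simp
qed

lemma R1_mult: assumes s: "s \<in> A" and r: "R1 p x q y" and c: "cd p = dm s" shows "R1 (m s p) x (m s q) y"
proof -
  have a: "p \<in> A" "q \<in> A" "cd p = cd q" "x \<in> Xd (m (iv p) q)" "th (m (iv q) p) x = y" using r R1_def by auto
  have "m (iv (m s p)) (m s q) = m (iv p) q" "m (iv (m s q)) (m s p) = m (iv q) p"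
    using s a c by (simp_all add: iv_mult)
  thus ?thesis unfolding R1_def using a s c by simp
qed

lemma eta_eq: assumes s: "s \<in> A" and pD: "(p,x) \<in> D" and c: "cd p = dm s"
  shows "et s (cl (p,x)) = cl (m s p, x)"
  unfolding gleta_def
proof (rule someI2)
  show "\<exists>q y. (q,y) \<in> cl (p,x) \<and> (q,y) \<in> glDs G X Xd (iv s) \<and> cl (m s p, x) = cl (m s q, y)"
    using cl_self pD Ds_iff s c by auto
next
  fix C' assume "\<exists>q y. (q,y) \<in> cl (p,x) \<and> (q,y) \<in> glDs G X Xd (iv s) \<and> C' = cl (m s q, y)"
  then obtain q y where q: "((p,x),(q,y)) \<in> Rx" "(q,y) \<in> D" "cd q = dm s" "C' = cl (m s q, y)"
    using in_cl Ds_iff s by auto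
  have "R1 p x q y" using same_cod q c by simp
  hence "R1 (m s p) x (m s q) y" using R1_mult s c by blast
  moreover have "(m s p, x) \<in> D" "(m s q, y) \<in> D" using mult_D s pD c q by auto
  ultimately have "((m s p, x),(m s q, y)) \<in> Rx" using approx_intro rl_def by blast
  thus "C' = cl (m s p, x)" using cl_eq q \<open>(m s p, x) \<in> D\<close> \<open>(m s q, y) \<in> D\<close> by blast
qed

lemma eta_in: assumes s: "s \<in> A" and C: "C \<in> Es (iv s)" shows "et s C \<in> Es s" "et (iv s) (et s C) = C"
proof -
  obtain p x where p: "(p,x) \<in> D" "cd p = dm s" "C = cl (p,x)" using C Es_iff s by auto
  have pA: "p \<in> A" using p D_iff by auto
  have e: "et s C = cl (m s p, x)" using eta_eq s p by simp
  have mD: "(m s p, x) \<in> D" using mult_D s p by blast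
  have "cd (m s p) = cd s" using s pA p by simp
  thus "et s C \<in> Es s" using e mD Es_intro s by simp
  have "et (iv s) (cl (m s p, x)) = cl (m (iv s) (m s p), x)" using eta_eq[of "iv s"] s mD pA p by simp
  thus "et (iv s) (et s C) = C" using e s pA p by simp
qed

lemma eta_mono: assumes s: "s \<in> A" and C: "C \<in> Es (iv s)" and C': "C' \<in> Es (iv s)" and l: "LE C C'"
  shows "LE (et s C) (et s C')"
proof -
  obtain p y where p: "(p,y) \<in> D" "cd p = dm s" "C' = cl (p,y)" using C' Es_iff s by auto
  have CE: "C \<in> EE" "C' \<in> EE" using C C' Es_E[of "iv s"] s iv_arr by blast+
  obtain x where x: "le x y" "(p,x) \<in> C" using le_elim CE l p cl_self by blast
  have Cx: "C = cl (p,x)" using E_mem CE x by blast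
  have xD: "(p,x) \<in> D" using E_D CE x by blast
  have "LE (cl (m s p, x)) (cl (m s p, y))" using le_intro mult_D s p x by blast
  thus ?thesis using eta_eq s p xD Cx by simp
qed

lemma eta_iso: assumes s: "s \<in> A" and C: "C \<in> Es (iv s)" and C': "C' \<in> Es (iv s)"
  shows "LE C C' \<longleftrightarrow> LE (et s C) (et s C')"
proof
  assume "LE C C'" thus "LE (et s C) (et s C')" using eta_mono assms by blast
next
  assume l: "LE (et s C) (et s C')"
  have "et s C \<in> Es (iv (iv s))" "et s C' \<in> Es (iv (iv s))" using eta_in assms by auto
  hence "LE (et (iv s) (et s C)) (et (iv s) (et s C'))" using eta_mono[of "iv s"] s l by simp
  thus "LE C C'" using eta_in assms by simp
qed

lemma ga_bij: "s \<in> A \<Longrightarrow> bij_betw (et s) (Es (iv s)) (Es s)"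
proof (rule bij_betw_byWitness[where f'="et (iv s)"])
  assume s: "s \<in> A"
  show "\<forall>a\<in>Es (iv s). et (iv s) (et s a) = a" using eta_in s by blast
  show "\<forall>a\<in>Es s. et s (et (iv s) a) = a" using eta_in[of "iv s"] s by simp
  show "et s ` Es (iv s) \<subseteq> Es s" using eta_in s by blast
  show "et (iv s) ` Es s \<subseteq> Es (iv s)" using eta_in[of "iv s"] s by auto
qed

lemma ga_ideal: assumes s: "s \<in> A" shows "order_ideal EE LE (Es s)"
  unfolding order_ideal_def
proof (intro conjI ballI impI)
  show "Es s \<subseteq> EE" using Es_E s by blast
  fix y z assume y: "y \<in> Es s" and z: "z \<in> EE" and l: "LE z y"
  obtain p w where p: "(p,w) \<in> D" "cd p = cd s" "y = cl (p,w)" using y Es_iff s by auto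
  have "y \<in> EE" "(p,w) \<in> y" using p cl_self cl_E by auto
  then obtain x where "le x w" "(p,x) \<in> z" using le_elim[of z y] z l by blast
  thus "z \<in> Es s" using Es_mem s z p by blast
qed

lemma ga_union: "EE = (\<Union>s\<in>A. Es s)"
proof
  show "EE \<subseteq> (\<Union>s\<in>A. Es s)"
  proof
    fix C assume "C \<in> EE"
    then obtain p x where p: "(p,x) \<in> D" "C = cl (p,x)" using E_rep by blast
    hence "p \<in> A" using D_iff by auto
    thus "C \<in> (\<Union>s\<in>A. Es s)" using Es_intro p by blast
  qed
  show "(\<Union>s\<in>A. Es s) \<subseteq> EE" using Es_E by blast
qed

lemma ga_comp: assumes st: "composable G s t"
  shows "(\<forall>x\<in>Es (iv t). et t x \<in> Es (iv s) \<longrightarrow> x \<in> Es (iv (m s t)) \<and> et (m s t) x = et s (et t x))"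
    "(\<forall>x\<in>Es (iv (m s t)). x \<in> Es (iv t) \<and> et t x \<in> Es (iv s))"
proof -
  have a: "s \<in> A" "t \<in> A" "dm s = cd t" using st unfolding composable_def by auto
  have "cd (iv (m s t)) = cd (iv t)" using a by simp
  hence e1: "Es (iv (m s t)) = Es (iv t)" using Es_cod[of "iv (m s t)" "iv t"] a by simp
  have "cd t = cd (iv s)" using a by simp
  hence e2: "Es t = Es (iv s)" using Es_cod[of t "iv s"] a by simp
  { fix C assume C: "C \<in> Es (iv t)"
    obtain p x where p: "(p,x) \<in> D" "cd p = dm t" "C = cl (p,x)" using C Es_iff a by auto
    have pA: "p \<in> A" using p D_iff by auto
    have "et t C = cl (m t p, x)" using eta_eq a p by simp
    moreover have "et s (cl (m t p, x)) = cl (m s (m t p), x)" using eta_eq a p mult_D pA by simp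
    moreover have "et (m s t) C = cl (m (m s t) p, x)" using eta_eq a p pA by simp
    ultimately have "et (m s t) C = et s (et t C)" using a pA p by simp }
  note comp = this
  show "\<forall>x\<in>Es (iv t). et t x \<in> Es (iv s) \<longrightarrow> x \<in> Es (iv (m s t)) \<and> et (m s t) x = et s (et t x)"
    using e1 comp by blast
  show "\<forall>x\<in>Es (iv (m s t)). x \<in> Es (iv t) \<and> et t x \<in> Es (iv s)"
    using e1 e2 eta_in a by blast
qed

lemma ga_pa: "partial_action G EE Es et"
  unfolding partial_action_def
proof (intro conjI)
  show "\<forall>s\<in>A. Es s \<subseteq> EE" using Es_E by blast
  show "\<forall>s\<in>A. bij_betw (et s) (Es (iv s)) (Es s)" using ga_bij by blast
  show "\<forall>s\<in>A. \<forall>x\<in>Es (iv s). et (iv s) (et s x) = x" using eta_in by blast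
  show "EE = (\<Union>s\<in>A. Es s)" by (rule ga_union)
  show "\<forall>s t. composable G s t \<longrightarrow>
        (\<forall>x\<in>Es (iv t). et t x \<in> Es (iv s) \<longrightarrow> x \<in> Es (iv (m s t)) \<and> et (m s t) x = et s (et t x))"
    using ga_comp(1) by blast
  show "\<forall>s t. nat_le G s t \<longrightarrow> Es s \<subseteq> Es t" using nat_le_eq by blast
qed

lemma glob_action: "ordered_global_action G EE LE Es et"
  unfolding ordered_global_action_def global_action_def ordered_action_cond_def
  using ga_pa ga_comp(2) ga_ideal eta_iso by blast

lemma idem_self: "idem G e \<Longrightarrow> m (iv e) e = e" using iv_idem idem_def by metis

lemma gli_eq: assumes e: "idem G e" and x: "x \<in> Xd e" shows "gi x = cl (e,x)"
proof -
  define e' where "e' = (SOME e. idem G e \<and> x \<in> Xd e)"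
  have ex: "\<exists>e. idem G e \<and> x \<in> Xd e" using e x by blast
  have e': "idem G e' \<and> x \<in> Xd e'" unfolding e'_def by (rule someI_ex[OF ex])
  have eA: "e \<in> A" "e' \<in> A" using e e' idem_arr by auto
  have D1: "(e',x) \<in> D" "(e,x) \<in> D" using D_iff e e' x idem_self eA by auto
  have "IR e' x e x" unfolding IR_def using eA e e' x iv_idem th_idem by simp
  hence "((e',x),(e,x)) \<in> Rx" using approx_intro D1 rl_def by blast
  hence "cl (e',x) = cl (e,x)" using cl_eq D1 by blast
  thus ?thesis unfolding gli_def e'_def by simp
qed

lemma gli_ex: "x \<in> arr X \<Longrightarrow> \<exists>e. idem G e \<and> x \<in> Xd e"
  using X_union Xd_sub idem_r by blast

lemma gli_D: "idem G e \<Longrightarrow> x \<in> Xd e \<Longrightarrow> (e,x) \<in> D"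
  using D_iff idem_self idem_arr by simp

lemma Y_E: "gi ` arr X \<subseteq> EE"
proof
  fix a assume "a \<in> gi ` arr X"
  then obtain x where x: "x \<in> arr X" "a = gi x" by blast
  then obtain e where "idem G e" "x \<in> Xd e" using gli_ex by blast
  thus "a \<in> EE" using x gli_eq gli_D cl_E by simp
qed

lemma gli_inj: "inj_on gi (arr X)"
proof (rule inj_onI)
  fix x y assume x: "x \<in> arr X" and y: "y \<in> arr X" and g: "gi x = gi y"
  obtain e f where e: "idem G e" "x \<in> Xd e" and f: "idem G f" "y \<in> Xd f" using gli_ex x y by blast
  have "cl (e,x) = cl (f,y)" using g gli_eq e f by simp
  hence "((e,x),(f,y)) \<in> Rx" using cl_eq gli_D e f by blast
  hence "th f y = th e x" using approx_img e iv_idem by simp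
  thus "x = y" using th_idem e f by simp
qed

lemma gli_le: assumes x: "x \<in> arr X" and y: "y \<in> arr X" shows "LE (gi x) (gi y) \<longleftrightarrow> le x y"
proof
  obtain f where f: "idem G f" "y \<in> Xd f" using gli_ex y by blast
  have fA: "f \<in> A" using f idem_arr by auto
  assume l: "LE (gi x) (gi y)"
  have E: "gi x \<in> EE" "gi y \<in> EE" using Y_E x y by auto
  have "(f,y) \<in> gi y" using gli_eq f gli_D cl_self by simp
  then obtain x' where x': "le x' y" "(f,x') \<in> gi x" using le_elim E l by blast
  have x'f: "x' \<in> Xd f" using ideal fA f x' by blast
  have "gi x = cl (f,x')" using E_mem E x' by blast
  hence "gi x' = gi x" using gli_eq f x'f by simp
  moreover have "x' \<in> arr X" using le_arr x' by blast
  ultimately have "x' = x" using gli_inj x unfolding inj_on_def by blast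
  thus "le x y" using x' by simp
next
  assume l: "le x y"
  obtain f where f: "idem G f" "y \<in> Xd f" using gli_ex y by blast
  have fA: "f \<in> A" using f idem_arr by auto
  have xf: "x \<in> Xd f" using ideal fA f l by blast
  show "LE (gi x) (gi y)" using le_intro gli_D f l gli_eq xf by simp
qed


lemma Y_ideal: "order_ideal EE LE (gi ` arr X)"
  unfolding order_ideal_def
proof (intro conjI ballI impI)
  show "gi ` arr X \<subseteq> EE" by (rule Y_E)
  fix a C assume a: "a \<in> gi ` arr X" and C: "C \<in> EE" and l: "LE C a"
  obtain y where y: "y \<in> arr X" "a = gi y" using a by blast
  obtain f where f: "idem G f" "y \<in> Xd f" using gli_ex y by blast
  have fA: "f \<in> A" using f idem_arr by auto
  have "(f,y) \<in> a" using gli_eq f gli_D cl_self y by simp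
  then obtain x where x: "le x y" "(f,x) \<in> C" using le_elim C Y_E a l by blast
  have xf: "x \<in> Xd f" using ideal fA f x by blast
  have "C = cl (f,x)" using E_mem C x by blast
  hence "C = gi x" using gli_eq f xf by simp
  thus "C \<in> gi ` arr X" using xf Xd_arr fA by blast
qed


lemma orbit_eq: "orbit G Es et (gi ` arr X) = EE"
  unfolding orbit_def
proof
  show "(\<Union>s\<in>A. et s ` (gi ` arr X \<inter> Es (iv s))) \<subseteq> EE" using eta_in Es_E by blast
  show "EE \<subseteq> (\<Union>s\<in>A. et s ` (gi ` arr X \<inter> Es (iv s)))"
  proof
    fix C assume "C \<in> EE"
    then obtain p x where p: "(p,x) \<in> D" "C = cl (p,x)" using E_rep by blast
    have pA: "p \<in> A" and xe: "x \<in> Xd (m (iv p) p)" using p D_iff by auto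
    let ?e = "m (iv p) p"
    have g: "gi x = cl (?e, x)" using gli_eq pA xe by simp
    have eD: "(?e,x) \<in> D" using gli_D pA xe by simp
    have "cd ?e = cd (iv p)" using pA by simp
    hence "gi x \<in> Es (iv p)" using g Es_intro[of "iv p"] pA eD by simp
    moreover have "x \<in> arr X" using D_Xd p by blast
    hence "gi x \<in> gi ` arr X" by blast
    moreover have "et p (gi x) = C" using g eta_eq[of p ?e x] pA eD p by simp
    ultimately show "C \<in> (\<Union>s\<in>A. et s ` (gi ` arr X \<inter> Es (iv s)))" using pA by blast
  qed
qed

lemma nonempty: "g \<in> A \<Longrightarrow> et g ` (gi ` arr X \<inter> Es (iv g)) \<inter> gi ` arr X \<noteq> {}"
proof -
  assume g: "g \<in> A"
  obtain x where x: "x \<in> Xd (iv g)" using ne g iv_arr by blast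
  let ?e = "m (iv g) g"
  have xe: "x \<in> Xd ?e" using Xd_sub[of "iv g" x] g x by simp
  have ge: "gi x = cl (?e, x)" using gli_eq g xe by simp
  have eD: "(?e,x) \<in> D" using gli_D g xe by simp
  have xX: "x \<in> arr X" using Xd_arr g x iv_arr by blast
  have "cd ?e = cd (iv g)" using g by simp
  hence "gi x \<in> Es (iv g)" using ge Es_intro[of "iv g"] g eD by simp
  hence in1: "gi x \<in> gi ` arr X \<inter> Es (iv g)" using xX by blast
  have et1: "et g (gi x) = cl (g, x)" using ge eta_eq[of g ?e x] g eD by simp
  let ?f = "m g (iv g)"
  have tg: "th g x \<in> Xd g" using th_in g x by blast
  have tf: "th g x \<in> Xd ?f" using Xd_sub g tg by blast
  have gf: "gi (th g x) = cl (?f, th g x)" using gli_eq g tf by simp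
  have D1: "(g,x) \<in> D" using D_iff g xe by simp
  have D2: "(?f, th g x) \<in> D" using gli_D g tf by simp
  have "IR g x ?f (th g x)" unfolding IR_def using g x tf th_idem iv_idem idem_r by simp
  hence "((g,x),(?f, th g x)) \<in> Rx" using approx_intro D1 D2 rl_def by blast
  hence "cl (g,x) = gi (th g x)" using cl_eq D1 D2 gf by simp
  moreover have "th g x \<in> arr X" using Xd_arr g tg by blast
  ultimately have "et g (gi x) \<in> gi ` arr X" using et1 by simp
  thus ?thesis using in1 by blast
qed

lemma mcal: "mcalister_triple G EE LE Es et (gi ` arr X)"
  unfolding mcalister_triple_def
proof (intro conjI)
  show "groupoid G" by (rule grp)
  show "poset_on EE LE" by (rule poset)
  show "order_ideal EE LE (gi ` arr X)" by (rule Y_ideal)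
  obtain T :: "(('a \<times> 'x) set, ('a \<times> 'x) set) semigroupoid" where
    T: "semilatticeoid T" "arr T = gi ` arr X" "\<forall>x\<in>arr X. \<forall>y\<in>arr X. nat_le T (gi x) (gi y) \<longleftrightarrow> le x y"
    using sl_transport[OF sl gli_inj] by blast
  show "\<exists>T :: (('a \<times> 'x) set, ('a \<times> 'x) set) semigroupoid. semilatticeoid T \<and> arr T = gi ` arr X \<and>
         (\<forall>x\<in>gi ` arr X. \<forall>y\<in>gi ` arr X. nat_le T x y \<longleftrightarrow> LE x y)"
    using T gli_le by (intro exI[of _ T]) auto
  show "ordered_global_action G EE LE Es et" by (rule glob_action)
  show "orbit G Es et (gi ` arr X) = EE" by (rule orbit_eq)
  show "\<forall>g\<in>A. et g ` (gi ` arr X \<inter> Es (iv g)) \<inter> gi ` arr X \<noteq> {}" using nonempty by blast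
qed

end

theorem mainTheorem9:
  fixes G :: "('a,'o) semigroupoid" and X :: "('x,'p) semigroupoid"
    and Xd :: "'a \<Rightarrow> 'x set" and th :: "'a \<Rightarrow> 'x \<Rightarrow> 'x"
  assumes "groupoid G"
    and "semilatticeoid X"
    and "ordered_partial_action G (arr X) (nat_le X) Xd th"
    and "\<forall>g\<in>arr G. Xd g \<noteq> {}"
  shows "mcalister_triple G (glE G X Xd th) (glle G X Xd th) (glEs G X Xd th) (gleta G X Xd th)
           (gli G X Xd th ` arr X)"
proof -
  interpret glob G X Xd th
    by (unfold_locales) (use assms in auto)
  show ?thesis by (rule mcal)
qed



end
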